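(* Let $(Y, S, A, \mathbf{X}^{P}, \mathbf{X}^{S})$ be jointly distributed random variables describing a unit drawn from an infinite population, where $Y$ is a real-valued outcome with $\mathbb{E}|Y|<\infty$, $S \in \{0,1\}$ is the survey inclusion indicator, $A \in \{1,\ldots,J\}$ is the area indicator, $\mathbf{X}^{P}$ (taking values in $\mathcal{X}^{P}$) are population covariates and $\mathbf{X}^{S}$ (taking values in $\mathcal{X}^{S}$) are survey-only covariates. Fix $j$ with $\Pr(A=j)>0$ and assume: (Sampling ignorability) $Y \perp\!\!\!\perp S \mid \mathbf{X}^{P}, A$ and $0 < \Pr(S=1 \mid \mathbf{X}^{P}, A) < 1$ for all $\mathbf{X}^{P}\in\mathcal{X}^{P}$; (Area ignorability) $Y \perp\!\!\!\perp A \mid \mathbf{X}^{P}, \mathbf{X}^{S}, S=1$ and $0 < \Pr(A=j \mid \mathbf{X}^{P}, \mathbf{X}^{S}, S=1) < 1$ for all $(\mathbf{X}^{P},\mathbf{X}^{S})\in\mathcal{X}^{P}\times\mathcal{X}^{S}$. Let $\pi_j(\mathbf{X}) = \Pr(S=1 \mid \mathbf{X}^{P}, A=j)$ and $p_j(\mathbf{X}) = \Pr(A=j \mid \mathbf{X}^{P}, \mathbf{X}^{S}, S=1)$. Then $\tau_j = \mathbb{E}[Y\mid A=j]$ satisfies $$\tau_j = \mathbb{E}\left\{ \frac{\mathbf{1}\{S=1, A=j\}}{\Pr(A=j)} \frac{Y}{\pi_j(\mathbf{X})}\, p_j(\mathbf{X}) \right\} + \mathbb{E}\left\{ \frac{\mathbf{1}\{S=1,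 A\neq j\}}{\Pr(A=j)} \frac{\Pr(A=j \mid \mathbf{X}^{P}, \mathbf{X}^{S}, S=1)}{\Pr(A\neq j \mid \mathbf{X}^{P}, \mathbf{X}^{S}, S=1)} \frac{Y}{\pi_j(\mathbf{X})} \,(1-p_j(\mathbf{X})) \right\}.$$
   Context: Notation: $\perp\!\!\!\perp$ denotes conditional independence; $\mathbf{1}\{\cdot\}$ is the indicator function; $\mathbf{X}$ is shorthand for the covariates $(\mathbf{X}^{P},\mathbf{X}^{S})$. The estimand for area $j$ is $\tau_j = \mathbb{E}[Y\mid A=j]$. *)

theory Defs
  imports "HOL-Probability.Probability"
begin

definition cond_indep ::
  "'a measure \<Rightarrow> ('a \<Rightarrow> 'b) \<Rightarrow> 'b measure \<Rightarrow> ('a \<Rightarrow> 'c) \<Rightarrow> 'c measure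
    \<Rightarrow> ('a \<Rightarrow> 'd) \<Rightarrow> 'd measure \<Rightarrow> bool" where
  "cond_indep M X MX Y MY Z MZ \<longleftrightarrow>
     (\<forall>B\<in>sets MX. \<forall>C\<in>sets MY.
        AE \<omega> in M.
          real_cond_exp M (vimage_algebra (space M) Z MZ)
             (\<lambda>w. indicator (X -` B \<inter> space M) w * indicator (Y -` C \<inter> space M) w) \<omega>
          = real_cond_exp M (vimage_algebra (space M) Z MZ) (indicator (X -` B \<inter> space M)) \<omega>
            * real_cond_exp M (vimage_algebra (space M) Z MZ) (indicator (Y -` C \<inter> space M)) \<omega>)"

end

theory Submission
  imports Defs
begin


lemma ennreal_max0: "ennreal (max x 0) = ennreal x"
  by (cases "x \<ge> 0") (auto simp: max_def ennreal_neg)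

lemma EQ:
  fixes u1 u2 Y :: "'a \<Rightarrow> real"
  assumes m: "u1 \<in> borel_measurable M" "u2 \<in> borel_measurable M" "Y \<in> borel_measurable M"
    and nn: "\<forall>\<omega>\<in>space M. 0 \<le> u1 \<omega> \<and> 0 \<le> u2 \<omega>"
    and H: "\<And>g::real \<Rightarrow> ennreal. g \<in> borel_measurable borel \<Longrightarrow>
         (\<integral>\<^sup>+\<omega>. ennreal (u1 \<omega>) * g (Y \<omega>) \<partial>M) = (\<integral>\<^sup>+\<omega>. ennreal (u2 \<omega>) * g (Y \<omega>) \<partial>M)"
    and i2: "integrable M (\<lambda>\<omega>. u2 \<omega> * Y \<omega>)"
  shows "integrable M (\<lambda>\<omega>. u1 \<omega> * Y \<omega>) \<and> (\<integral>\<omega>. u1 \<omega> * Y \<omega> \<partial>M) = (\<integral>\<omega>. u2 \<omega> * Y \<omega> \<partial>M)"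
proof -
  have K: "(\<integral>\<^sup>+\<omega>. ennreal (g (u1 \<omega> * Y \<omega>)) \<partial>M) = (\<integral>\<^sup>+\<omega>. ennreal (g (u2 \<omega> * Y \<omega>)) \<partial>M)"
    if g1: "\<And>a y. 0 \<le> a \<Longrightarrow> g (a * y) = a * g y" and g2: "\<And>y. 0 \<le> g y"
      and gm: "g \<in> borel_measurable borel" for g :: "real \<Rightarrow> real"
  proof -
    have "(\<integral>\<^sup>+\<omega>. ennreal (g (u1 \<omega> * Y \<omega>)) \<partial>M) = (\<integral>\<^sup>+\<omega>. ennreal (u1 \<omega>) * ennreal (g (Y \<omega>)) \<partial>M)"
      by (rule nn_integral_cong) (simp add: g1 nn ennreal_mult')
    also have "\<dots> = (\<integral>\<^sup>+\<omega>. ennreal (u2 \<omega>) * ennreal (g (Y \<omega>)) \<partial>M)"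
      by (rule H) (use gm in measurable)
    also have "\<dots> = (\<integral>\<^sup>+\<omega>. ennreal (g (u2 \<omega> * Y \<omega>)) \<partial>M)"
      by (rule nn_integral_cong) (simp add: g1 nn ennreal_mult')
    finally show ?thesis .
  qed
  have Ka: "(\<integral>\<^sup>+\<omega>. ennreal (norm (u1 \<omega> * Y \<omega>)) \<partial>M) = (\<integral>\<^sup>+\<omega>. ennreal (norm (u2 \<omega> * Y \<omega>)) \<partial>M)"
    using K[of abs] by (simp add: abs_mult)
  have Kp: "(\<integral>\<^sup>+\<omega>. ennreal (u1 \<omega> * Y \<omega>) \<partial>M) = (\<integral>\<^sup>+\<omega>. ennreal (u2 \<omega> * Y \<omega>) \<partial>M)"
    proof -
    have "(\<integral>\<^sup>+\<omega>. ennreal (max (u1 \<omega> * Y \<omega>) 0) \<partial>M) = (\<integral>\<^sup>+\<omega>. ennreal (max (u2 \<omega> * Y \<omega>) 0) \<partial>M)"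
      by (rule K) (auto simp: max_def mult_nonneg_nonpos mult_le_0_iff)
    then show ?thesis by (simp add: ennreal_max0)
  qed
  have Kn: "(\<integral>\<^sup>+\<omega>. ennreal (- (u1 \<omega> * Y \<omega>)) \<partial>M) = (\<integral>\<^sup>+\<omega>. ennreal (- (u2 \<omega> * Y \<omega>)) \<partial>M)"
    proof -
    have "(\<integral>\<^sup>+\<omega>. ennreal (max (- (u1 \<omega> * Y \<omega>)) 0) \<partial>M) = (\<integral>\<^sup>+\<omega>. ennreal (max (- (u2 \<omega> * Y \<omega>)) 0) \<partial>M)"
      by (rule K) (auto simp: max_def mult_nonneg_nonpos mult_le_0_iff zero_le_mult_iff)
    then show ?thesis by (simp add: ennreal_max0)
  qed
  have i1: "integrable M (\<lambda>\<omega>. u1 \<omega> * Y \<omega>)"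
    using i2 Ka m unfolding integrable_iff_bounded by auto
  show ?thesis using i1 i2 Kp Kn by (simp add: real_lebesgue_integral_def)
qed


lemma GEN:
  fixes N :: "'a measure" and Z :: "'a \<Rightarrow> 'z" and Y :: "'a \<Rightarrow> real" and s :: "'a \<Rightarrow> real"
  assumes N: "prob_space N"
    and Zm: "Z \<in> measurable N MZ"
    and Em: "E \<in> sets N"
    and Ym: "Y \<in> borel_measurable N"
    and Fdef: "F = vimage_algebra (space N) Z MZ"
    and ci: "\<forall>B\<in>sets borel. AE \<omega> in N.
       real_cond_exp N F (\<lambda>w. indicator (Y -` B \<inter> space N) w * indicator E w) \<omega>
       = real_cond_exp N F (indicator (Y -` B \<inter> space N)) \<omega> * real_cond_exp N F (indicator E) \<omega>"
    and sm: "s \<in> borel_measurable F" and sb: "\<forall>\<omega>\<in>space N. 0 \<le> s \<omega> \<and> s \<omega> \<le> 1"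
    and sc: "\<forall>D\<in>sets MZ. (\<integral>\<omega>. indicator E \<omega> * indicator D (Z \<omega>) \<partial>N) = (\<integral>\<omega>. s \<omega> * indicator D (Z \<omega>) \<partial>N)"
    and G: "G \<in> borel_measurable (MZ \<Otimes>\<^sub>M borel)"
  shows "(\<integral>\<^sup>+\<omega>. indicator E \<omega> * G (Z \<omega>, Y \<omega>) \<partial>N) = (\<integral>\<^sup>+\<omega>. ennreal (s \<omega>) * G (Z \<omega>, Y \<omega>) \<partial>N)"
proof -
  interpret prob_space N by (rule N)
  have ZS: "Z \<in> space N \<rightarrow> space MZ" using Zm by (auto simp: measurable_def)
  have sub: "subalgebra N F"
    unfolding subalgebra_def Fdef
    using ZS Zm by (auto simp: sets_vimage_algebra2 intro: measurable_sets)
  interpret sigma_finite_subalgebra N F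
    by (rule finite_measure_subalgebra_is_sigma_finite)
       (simp add: finite_measure_subalgebra_def finite_measure_subalgebra_axioms_def sub finite_measure_axioms)
  have ZF: "Z \<in> measurable F MZ" unfolding Fdef by (rule measurable_vimage_algebra1[OF ZS])
  have sN: "s \<in> borel_measurable N" by (rule measurable_from_subalg[OF sub sm])
  have Em': "indicator E \<in> borel_measurable N" using Em by simp
  have intE: "integrable N (indicator E :: 'a \<Rightarrow> real)" using Em by (simp add: integrable_indicator_iff less_top[symmetric])
  have ints: "integrable N s"
    by (rule Bochner_Integration.integrable_bound[where f="\<lambda>_. 1::real"]) (auto simp: sN sb intro!: AE_I2)
  have rs: "AE \<omega> in N. real_cond_exp N F (indicator E) \<omega> = s \<omega>"
  proof (rule real_cond_exp_charact[OF _ intE ints sm])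
    fix A assume "A \<in> sets F"
    then obtain D where D: "D \<in> sets MZ" "A = Z -` D \<inter> space N"
      using ZS unfolding Fdef by (auto simp: sets_vimage_algebra2)
    have "(\<integral>x\<in>A. (indicator E x :: real) \<partial>N) = (\<integral>\<omega>. indicator E \<omega> * indicator D (Z \<omega>) \<partial>N)"
      unfolding set_lebesgue_integral_def D(2)
      by (rule Bochner_Integration.integral_cong) (auto split: split_indicator)
    also have "\<dots> = (\<integral>\<omega>. s \<omega> * indicator D (Z \<omega>) \<partial>N)" using sc D(1) by auto
    also have "\<dots> = (\<integral>x\<in>A. s x \<partial>N)"
      unfolding set_lebesgue_integral_def D(2)
      by (rule Bochner_Integration.integral_cong) (auto split: split_indicator)
    finally show "(\<integral>x\<in>A. indicator E x \<partial>N) = (\<integral>x\<in>A. s x \<partial>N)" .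
  qed
  have rect: "(\<integral>\<omega>. indicator D (Z \<omega>) * (indicator (Y -` B \<inter> space N) \<omega> * indicator E \<omega>) \<partial>N)
      = (\<integral>\<omega>. (indicator D (Z \<omega>) * s \<omega>) * indicator (Y -` B \<inter> space N) \<omega> \<partial>N)"
    if D: "D \<in> sets MZ" and B: "B \<in> sets borel" for D B
  proof -
    let ?I = "indicator (Y -` B \<inter> space N) :: 'a \<Rightarrow> real"
    have IB: "Y -` B \<inter> space N \<in> sets N" using Ym B by (rule measurable_sets)
    have hF: "(\<lambda>\<omega>. indicator D (Z \<omega>) :: real) \<in> borel_measurable F"
      using ZF D by measurable
    have hsF: "(\<lambda>\<omega>. indicator D (Z \<omega>) * s \<omega> :: real) \<in> borel_measurable F"
      using hF sm by measurable
    have hN: "(\<lambda>\<omega>. indicator D (Z \<omega>) :: real) \<in> borel_measurable N"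
      by (rule measurable_from_subalg[OF sub hF])
    have "(\<integral>\<omega>. indicator D (Z \<omega>) * (?I \<omega> * indicator E \<omega>) \<partial>N)
        = (\<integral>\<omega>. indicator D (Z \<omega>) * real_cond_exp N F (\<lambda>w. ?I w * indicator E w) \<omega> \<partial>N)"
    proof (rule real_cond_exp_intg(2)[symmetric, OF _ hF])
      show "(\<lambda>w. ?I w * indicator E w) \<in> borel_measurable N" using IB Em by measurable
      have "(\<lambda>x. indicator D (Z x) * (?I x * indicator E x)) \<in> borel_measurable N"
        using hN IB Em by measurable
      then show "integrable N (\<lambda>x. indicator D (Z x) * (?I x * indicator E x))"
        by (rule Bochner_Integration.integrable_bound[where f="\<lambda>_. 1::real", rotated])
           (auto intro!: AE_I2 simp: indicator_def)
    qed
    also have "\<dots> = (\<integral>\<omega>. indicator D (Z \<omega>) * (real_cond_exp N F ?I \<omega> * s \<omega>) \<partial>N)"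
    proof (rule integral_cong_AE)
      show "AE \<omega> in N. indicator D (Z \<omega>) * real_cond_exp N F (\<lambda>w. ?I w * indicator E w) \<omega> =
           indicator D (Z \<omega>) * (real_cond_exp N F ?I \<omega> * s \<omega>)"
        using ci B rs by auto
    qed (use hN sN in auto)
    also have "\<dots> = (\<integral>\<omega>. (indicator D (Z \<omega>) * s \<omega>) * real_cond_exp N F ?I \<omega> \<partial>N)"
      by (simp add: ac_simps)
    also have "\<dots> = (\<integral>\<omega>. (indicator D (Z \<omega>) * s \<omega>) * ?I \<omega> \<partial>N)"
    proof (rule real_cond_exp_intg(2)[OF _ hsF])
      show "?I \<in> borel_measurable N" using IB by measurable
      have "(\<lambda>x. indicator D (Z x) * s x * ?I x) \<in> borel_measurable N"
        using hN IB sN by measurable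
      then show "integrable N (\<lambda>x. indicator D (Z x) * s x * ?I x)"
        by (rule Bochner_Integration.integrable_bound[where f="\<lambda>_. 1::real", rotated])
           (auto intro!: AE_I2 simp: indicator_def sb)
    qed
    finally show ?thesis .
  qed
  have ZY: "(\<lambda>\<omega>. (Z \<omega>, Y \<omega>)) \<in> measurable N (MZ \<Otimes>\<^sub>M borel)"
    using Zm Ym by measurable
  define \<nu>1 where "\<nu>1 = distr (density N (indicator E)) (MZ \<Otimes>\<^sub>M borel) (\<lambda>\<omega>. (Z \<omega>, Y \<omega>))"
  define \<nu>2 where "\<nu>2 = distr (density N (\<lambda>\<omega>. ennreal (s \<omega>))) (MZ \<Otimes>\<^sub>M borel) (\<lambda>\<omega>. (Z \<omega>, Y \<omega>))"
  have em: "emeasure \<nu>1 (D \<times> B) = emeasure \<nu>2 (D \<times> B) \<and> emeasure \<nu>1 (D \<times> B) \<noteq> \<infinity>"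
    if D: "D \<in> sets MZ" and B: "B \<in> sets borel" for D B
  proof -
    let ?I = "indicator (Y -` B \<inter> space N) :: 'a \<Rightarrow> real"
    have IB: "Y -` B \<inter> space N \<in> sets N" using Ym B by (rule measurable_sets)
    have DB: "D \<times> B \<in> sets (MZ \<Otimes>\<^sub>M borel)" using D B by auto
    have pre: "(\<lambda>\<omega>. (Z \<omega>, Y \<omega>)) -` (D \<times> B) \<inter> space N \<in> sets N"
      using ZY DB by (rule measurable_sets)
    have hN: "(\<lambda>\<omega>. indicator D (Z \<omega>) :: real) \<in> borel_measurable N"
      using Zm D by measurable
    have m1: "(\<lambda>x. indicator D (Z x) * (?I x * indicator E x)) \<in> borel_measurable N"
      using hN IB Em by measurable
    have i1: "integrable N (\<lambda>x. indicator D (Z x) * (?I x * indicator E x))"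
      using m1 by (rule Bochner_Integration.integrable_bound[where f="\<lambda>_. 1::real", rotated])
           (auto intro!: AE_I2 simp: indicator_def)
    have m2: "(\<lambda>x. indicator D (Z x) * s x * ?I x) \<in> borel_measurable N"
      using hN IB sN by measurable
    have i2: "integrable N (\<lambda>x. indicator D (Z x) * s x * ?I x)"
      using m2 by (rule Bochner_Integration.integrable_bound[where f="\<lambda>_. 1::real", rotated])
           (auto intro!: AE_I2 simp: indicator_def sb)
    have "emeasure \<nu>1 (D \<times> B) = (\<integral>\<^sup>+x. indicator E x * indicator ((\<lambda>\<omega>. (Z \<omega>, Y \<omega>)) -` (D \<times> B) \<inter> space N) x \<partial>N)"
      unfolding \<nu>1_def using ZY DB pre Em
      by (simp add: emeasure_distr emeasure_density)
    also have "\<dots> = (\<integral>\<^sup>+x. ennreal (indicator D (Z x) * (?I x * indicator E x)) \<partial>N)"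
      by (rule nn_integral_cong) (auto split: split_indicator)
    also have "\<dots> = ennreal (\<integral>x. indicator D (Z x) * (?I x * indicator E x) \<partial>N)"
      by (rule nn_integral_eq_integral[OF i1]) (auto intro!: AE_I2)
    finally have e1: "emeasure \<nu>1 (D \<times> B) = ennreal (\<integral>x. indicator D (Z x) * (?I x * indicator E x) \<partial>N)" .
    have "emeasure \<nu>2 (D \<times> B) = (\<integral>\<^sup>+x. ennreal (s x) * indicator ((\<lambda>\<omega>. (Z \<omega>, Y \<omega>)) -` (D \<times> B) \<inter> space N) x \<partial>N)"
      unfolding \<nu>2_def using ZY DB pre sN
      by (simp add: emeasure_distr emeasure_density)
    also have "\<dots> = (\<integral>\<^sup>+x. ennreal (indicator D (Z x) * s x * ?I x) \<partial>N)"
      by (rule nn_integral_cong) (auto split: split_indicator)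
    also have "\<dots> = ennreal (\<integral>x. indicator D (Z x) * s x * ?I x \<partial>N)"
      by (rule nn_integral_eq_integral[OF i2]) (auto intro!: AE_I2 simp: sb)
    finally have e2: "emeasure \<nu>2 (D \<times> B) = ennreal (\<integral>x. indicator D (Z x) * s x * ?I x \<partial>N)" .
    show ?thesis using e1 e2 rect[OF D B] by simp
  qed
  have "\<nu>1 = \<nu>2"
  proof (rule measure_eqI_generator_eq[OF Int_stable_pair_measure_generator pair_measure_closed])
    show "\<And>X. X \<in> {a \<times> b |a b. a \<in> sets MZ \<and> b \<in> sets borel} \<Longrightarrow> emeasure \<nu>1 X = emeasure \<nu>2 X"
      using em by blast
    show "sets \<nu>1 = sigma_sets (space MZ \<times> space borel) {a \<times> b |a b. a \<in> sets MZ \<and> b \<in> sets borel}"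
      unfolding \<nu>1_def by (simp add: sets_pair_measure)
    show "sets \<nu>2 = sigma_sets (space MZ \<times> space borel) {a \<times> b |a b. a \<in> sets MZ \<and> b \<in> sets borel}"
      unfolding \<nu>2_def by (simp add: sets_pair_measure)
    show "range (\<lambda>i. space MZ \<times> space borel) \<subseteq> {a \<times> b |a b. a \<in> sets MZ \<and> b \<in> sets borel}"
      by blast
    show "(\<Union>i. space MZ \<times> space borel) = space MZ \<times> space borel" by simp
    show "\<And>i. emeasure \<nu>1 (space MZ \<times> space borel) \<noteq> \<infinity>"
      using em[of "space MZ" "space borel"] by (metis sets.top sets_borel_eq_count_space UNIV_I space_borel)
  qed
  have "(\<integral>\<^sup>+\<omega>. indicator E \<omega> * G (Z \<omega>, Y \<omega>) \<partial>N) = integral\<^sup>N \<nu>1 G"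
    unfolding \<nu>1_def using ZY G Em by (simp add: nn_integral_distr nn_integral_density)
  also have "\<dots> = integral\<^sup>N \<nu>2 G" using \<open>\<nu>1 = \<nu>2\<close> by simp
  also have "\<dots> = (\<integral>\<^sup>+\<omega>. ennreal (s \<omega>) * G (Z \<omega>, Y \<omega>) \<partial>N)"
    unfolding \<nu>2_def using ZY G sN by (simp add: nn_integral_distr nn_integral_density)
  finally show ?thesis .
qed


lemma int_unif:
  fixes f :: "'a \<Rightarrow> real"
  assumes "finite_measure M" "T \<in> sets M" "measure M T > 0" "f \<in> borel_measurable M"
  shows "integral\<^sup>L (uniform_measure M T) f = (\<integral>x. indicator T x * f x \<partial>M) / measure M T"
proof -
  interpret finite_measure M by fact
  have e: "emeasure M T = ennreal (measure M T)" by (simp add: emeasure_eq_ennreal_measure)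
  have "uniform_measure M T = density M (\<lambda>x. ennreal (indicator T x / measure M T))"
    unfolding uniform_measure_def e
    by (rule density_cong) (use assms in \<open>auto split: split_indicator simp: divide_ennreal divide_ennreal[of 1, simplified]\<close>)
  then have "integral\<^sup>L (uniform_measure M T) f = (\<integral>x. (indicator T x / measure M T) *\<^sub>R f x \<partial>M)"
    using assms by (simp add: integral_density)
  also have "\<dots> = (\<integral>x. indicator T x * f x / measure M T \<partial>M)"
    by (rule Bochner_Integration.integral_cong) auto
  finally show ?thesis by simp
qed

lemma ennreal_inv_cancel: "0 < (a::real) \<Longrightarrow> ennreal a * (ennreal (1 / a) * x) = x"
  by (simp add: mult.assoc[symmetric] ennreal_mult[symmetric])

lemma ennr_div: "0 \<le> (a::real) \<Longrightarrow> ennreal (a / b) * x = ennreal a * (ennreal (1 / b) * x)"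
proof -
  assume a: "0 \<le> a"
  have "ennreal (a / b) = ennreal (a * (1 / b))" by simp
  also have "\<dots> = ennreal a * ennreal (1 / b)" using a by (rule ennreal_mult')
  finally show ?thesis by (simp add: mult.assoc)
qed

theorem corollary1:
  fixes M :: "'a measure" and MP :: "'p measure" and MS :: "'s measure"
    and Y :: "'a \<Rightarrow> real" and S :: "'a \<Rightarrow> bool" and A :: "'a \<Rightarrow> nat"
    and XP :: "'a \<Rightarrow> 'p" and XS :: "'a \<Rightarrow> 's"
    and J j :: nat
    and piS :: "'p \<times> nat \<Rightarrow> real" and p :: "'p \<times> 's \<Rightarrow> real"
  assumes "prob_space M"
    and Y_meas: "Y \<in> borel_measurable M" and Y_int: "integrable M Y"
    and S_meas: "S \<in> measurable M (count_space UNIV)"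
    and A_meas: "A \<in> measurable M (count_space UNIV)"
    and A_range: "\<forall>\<omega>\<in>space M. A \<omega> \<in> {1..J}"
    and XP_meas: "XP \<in> measurable M MP"
    and XS_meas: "XS \<in> measurable M MS"
    and j: "j \<in> {1..J}" and Aj_pos: "measure M {\<omega>\<in>space M. A \<omega> = j} > 0"
    \<comment> \<open>sampling ignorability\<close>
    and samp_ci: "cond_indep M Y borel S (count_space UNIV)
                    (\<lambda>\<omega>. (XP \<omega>, A \<omega>)) (MP \<Otimes>\<^sub>M count_space UNIV)"
    \<comment> \<open>area ignorability (in the subpopulation S = 1)\<close>
    and area_ci: "cond_indep (uniform_measure M {\<omega>\<in>space M. S \<omega>}) Y borel A (count_space UNIV)
                    (\<lambda>\<omega>. (XP \<omega>, XS \<omega>)) (MP \<Otimes>\<^sub>M MS)"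
    \<comment> \<open>piS is a version of Pr(S=1 | XP, A)\<close>
    and piS_meas: "piS \<in> borel_measurable (MP \<Otimes>\<^sub>M count_space UNIV)"
    and piS_cond: "\<forall>C\<in>sets (MP \<Otimes>\<^sub>M count_space UNIV).
        measure M {\<omega>\<in>space M. S \<omega> \<and> (XP \<omega>, A \<omega>) \<in> C}
        = (\<integral>\<omega>. piS (XP \<omega>, A \<omega>) * indicator C (XP \<omega>, A \<omega>) \<partial>M)"
    and piS_pos: "\<forall>xp\<in>space MP. \<forall>a\<in>{1..J}. 0 < piS (xp, a) \<and> piS (xp, a) < 1"
    \<comment> \<open>p is a version of Pr(A=j | XP, XS, S=1)\<close>
    and p_meas: "p \<in> borel_measurable (MP \<Otimes>\<^sub>M MS)"
    and p_cond: "\<forall>C\<in>sets (MP \<Otimes>\<^sub>M MS).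
        measure M {\<omega>\<in>space M. S \<omega> \<and> A \<omega> = j \<and> (XP \<omega>, XS \<omega>) \<in> C}
        = (\<integral>\<omega>. indicator {\<omega>\<in>space M. S \<omega>} \<omega> * p (XP \<omega>, XS \<omega>)
                 * indicator C (XP \<omega>, XS \<omega>) \<partial>M)"
    and p_pos: "\<forall>z\<in>space (MP \<Otimes>\<^sub>M MS). 0 < p z \<and> p z < 1"
  shows "(\<integral>\<omega>. Y \<omega> * indicator {\<omega>\<in>space M. A \<omega> = j} \<omega> \<partial>M)
           / measure M {\<omega>\<in>space M. A \<omega> = j}
         = (\<integral>\<omega>. indicator {\<omega>\<in>space M. S \<omega> \<and> A \<omega> = j} \<omega>
                   / measure M {\<omega>\<in>space M. A \<omega> = j}
                 * (Y \<omega> / piS (XP \<omega>, j)) * p (XP \<omega>, XS \<omega>) \<partial>M)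
         + (\<integral>\<omega>. indicator {\<omega>\<in>space M. S \<omega> \<and> A \<omega> \<noteq> j} \<omega>
                   / measure M {\<omega>\<in>space M. A \<omega> = j}
                 * (p (XP \<omega>, XS \<omega>) / (1 - p (XP \<omega>, XS \<omega>)))
                 * (Y \<omega> / piS (XP \<omega>, j)) * (1 - p (XP \<omega>, XS \<omega>)) \<partial>M)"
proof -
  interpret prob_space M by fact
  note [measurable] = S_meas A_meas XP_meas XS_meas Y_meas piS_meas p_meas
  let ?E1 = "{\<omega>\<in>space M. S \<omega>}"
  let ?E2 = "{\<omega>\<in>space M. A \<omega> = j}"
  define c where "c = measure M ?E2"
  define pi where "pi = (\<lambda>\<omega>. piS (XP \<omega>, j))"
  define pp where "pp = (\<lambda>\<omega>. p (XP \<omega>, XS \<omega>))"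
  have XPsp: "\<And>\<omega>. \<omega> \<in> space M \<Longrightarrow> XP \<omega> \<in> space MP" by (rule measurable_space[OF XP_meas])
  have XSsp: "\<And>\<omega>. \<omega> \<in> space M \<Longrightarrow> XS \<omega> \<in> space MS" by (rule measurable_space[OF XS_meas])
  have pipos: "\<And>\<omega>. \<omega> \<in> space M \<Longrightarrow> 0 < pi \<omega>" using piS_pos XPsp j by (auto simp: pi_def)
  have pprange: "\<And>\<omega>. \<omega> \<in> space M \<Longrightarrow> 0 < pp \<omega> \<and> pp \<omega> < 1"
    using p_pos XPsp XSsp by (auto simp: pp_def space_pair_measure)
  have pim[measurable]: "pi \<in> borel_measurable M" unfolding pi_def by measurable
  have ppm[measurable]: "pp \<in> borel_measurable M" unfolding pp_def by measurable
  have E1s[measurable]: "?E1 \<in> sets M" by measurable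
  have E2s[measurable]: "?E2 \<in> sets M" by measurable
  have indAj[measurable]: "(\<lambda>\<omega>. indicator {j} (A \<omega>) :: real) \<in> borel_measurable M"
    using measurable_compose[OF A_meas, of "indicator {j} :: nat \<Rightarrow> real"] by simp
  define usj where "usj = (\<lambda>\<omega>. indicator ?E1 \<omega> * indicator {j} (A \<omega>) / pi \<omega> :: real)"
  define usp where "usp = (\<lambda>\<omega>. indicator ?E1 \<omega> * pp \<omega> / pi \<omega> :: real)"
  have usjm[measurable]: "usj \<in> borel_measurable M" unfolding usj_def using indAj pim E1s by measurable
  have uspm[measurable]: "usp \<in> borel_measurable M" unfolding usp_def by measurable

  have Z1m: "(\<lambda>\<omega>. (XP \<omega>, A \<omega>)) \<in> measurable M (MP \<Otimes>\<^sub>M count_space (UNIV::nat set))" by measurable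
  have Z1S: "(\<lambda>\<omega>. (XP \<omega>, A \<omega>)) \<in> space M \<rightarrow> space (MP \<Otimes>\<^sub>M count_space (UNIV::nat set))"
    using Z1m by (auto simp: measurable_def)
  have E1m: "S -` {True} \<inter> space M \<in> sets M" by measurable
  have ci1: "\<forall>B\<in>sets borel. AE \<omega> in M.
       real_cond_exp M (vimage_algebra (space M) (\<lambda>\<omega>. (XP \<omega>, A \<omega>)) (MP \<Otimes>\<^sub>M count_space (UNIV::nat set)))
         (\<lambda>w. indicator (Y -` B \<inter> space M) w * indicator (S -` {True} \<inter> space M) w) \<omega>
       = real_cond_exp M (vimage_algebra (space M) (\<lambda>\<omega>. (XP \<omega>, A \<omega>)) (MP \<Otimes>\<^sub>M count_space (UNIV::nat set)))
           (indicator (Y -` B \<inter> space M)) \<omega>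
         * real_cond_exp M (vimage_algebra (space M) (\<lambda>\<omega>. (XP \<omega>, A \<omega>)) (MP \<Otimes>\<^sub>M count_space (UNIV::nat set)))
           (indicator (S -` {True} \<inter> space M)) \<omega>"
  proof -
    have T: "{True} \<in> sets (count_space (UNIV::bool set))" by simp
    show ?thesis using samp_ci T unfolding cond_indep_def by blast
  qed
  have s1m: "(\<lambda>\<omega>. piS (XP \<omega>, A \<omega>)) \<in> borel_measurable
      (vimage_algebra (space M) (\<lambda>\<omega>. (XP \<omega>, A \<omega>)) (MP \<Otimes>\<^sub>M count_space (UNIV::nat set)))"
    using measurable_compose[OF measurable_vimage_algebra1[OF Z1S] piS_meas] by simp
  have s1b: "\<forall>\<omega>\<in>space M. 0 \<le> piS (XP \<omega>, A \<omega>) \<and> piS (XP \<omega>, A \<omega>) \<le> 1"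
    using piS_pos A_range XPsp by (auto simp: less_imp_le)
  have sc1: "\<forall>D\<in>sets (MP \<Otimes>\<^sub>M count_space (UNIV::nat set)).
      (\<integral>\<omega>. (indicator (S -` {True} \<inter> space M) \<omega> :: real) * indicator D (XP \<omega>, A \<omega>) \<partial>M)
      = (\<integral>\<omega>. piS (XP \<omega>, A \<omega>) * indicator D (XP \<omega>, A \<omega>) \<partial>M)"
  proof
    fix D assume D: "D \<in> sets (MP \<Otimes>\<^sub>M count_space (UNIV::nat set))"
    have "(\<integral>\<omega>. (indicator (S -` {True} \<inter> space M) \<omega> :: real) * indicator D (XP \<omega>, A \<omega>) \<partial>M)
        = (\<integral>\<omega>. (indicator {\<omega>\<in>space M. S \<omega> \<and> (XP \<omega>, A \<omega>) \<in> D} \<omega> :: real) \<partial>M)"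
      by (rule Bochner_Integration.integral_cong) (auto split: split_indicator)
    also have "\<dots> = measure M {\<omega>\<in>space M. S \<omega> \<and> (XP \<omega>, A \<omega>) \<in> D}"
      by (simp add: Int_absorb2 subset_iff)
    also have "\<dots> = (\<integral>\<omega>. piS (XP \<omega>, A \<omega>) * indicator D (XP \<omega>, A \<omega>) \<partial>M)"
      using piS_cond D by blast
    finally show "(\<integral>\<omega>. (indicator (S -` {True} \<inter> space M) \<omega> :: real) * indicator D (XP \<omega>, A \<omega>) \<partial>M)
      = (\<integral>\<omega>. piS (XP \<omega>, A \<omega>) * indicator D (XP \<omega>, A \<omega>) \<partial>M)" .
  qed
  have R1: "(\<integral>\<^sup>+\<omega>. ennreal (usj \<omega>) * g (Y \<omega>) \<partial>M) = (\<integral>\<^sup>+\<omega>. ennreal (indicator {j} (A \<omega>)) * g (Y \<omega>) \<partial>M)"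
    if gm: "g \<in> borel_measurable borel" for g :: "real \<Rightarrow> ennreal"
  proof -
    define G where "G = (\<lambda>x::('p \<times> nat) \<times> real. ennreal (indicator {j} (snd (fst x)) / piS (fst (fst x), j)) * g (snd x))"
    let ?X = "(MP \<Otimes>\<^sub>M count_space (UNIV::nat set)) \<Otimes>\<^sub>M borel"
    have jc: "(\<lambda>x. j) \<in> measurable ?X (count_space (UNIV::nat set))" by (rule measurable_const) simp
    have a: "(\<lambda>x. piS (fst (fst x), j)) \<in> borel_measurable ?X"
      using measurable_compose[OF measurable_Pair[OF measurable_compose[OF measurable_fst measurable_fst] jc] piS_meas] .
    have b: "(\<lambda>x. indicator {j} (snd (fst x)) :: real) \<in> borel_measurable ?X"
      using measurable_compose[OF measurable_compose[OF measurable_fst measurable_snd] borel_measurable_count_space] .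
    have cc: "(\<lambda>x. g (snd x)) \<in> borel_measurable ?X"
      using measurable_compose[OF measurable_snd gm] .
    have d: "(\<lambda>x. ennreal (indicator {j} (snd (fst x)) / piS (fst (fst x), j))) \<in> borel_measurable ?X"
      using measurable_compose[OF borel_measurable_divide[OF b a] measurable_ennreal] .
    have Gm: "G \<in> borel_measurable ?X"
      unfolding G_def by (rule borel_measurable_times_ennreal[OF d cc])
    have X: "(\<integral>\<^sup>+\<omega>. indicator (S -` {True} \<inter> space M) \<omega> * G ((XP \<omega>, A \<omega>), Y \<omega>) \<partial>M)
       = (\<integral>\<^sup>+\<omega>. ennreal (piS (XP \<omega>, A \<omega>)) * G ((XP \<omega>, A \<omega>), Y \<omega>) \<partial>M)"
      by (rule GEN[OF prob_space_axioms Z1m E1m Y_meas refl ci1 s1m s1b sc1 Gm])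
    have "(\<integral>\<^sup>+\<omega>. ennreal (usj \<omega>) * g (Y \<omega>) \<partial>M)
        = (\<integral>\<^sup>+\<omega>. indicator (S -` {True} \<inter> space M) \<omega> * G ((XP \<omega>, A \<omega>), Y \<omega>) \<partial>M)"
      by (rule nn_integral_cong) (auto simp: usj_def G_def pi_def split: split_indicator)
    also note X
    also have "(\<integral>\<^sup>+\<omega>. ennreal (piS (XP \<omega>, A \<omega>)) * G ((XP \<omega>, A \<omega>), Y \<omega>) \<partial>M)
        = (\<integral>\<^sup>+\<omega>. ennreal (indicator {j} (A \<omega>)) * g (Y \<omega>) \<partial>M)"
      by (rule nn_integral_cong) (auto simp: G_def ennreal_inv_cancel pipos[unfolded pi_def] split: split_indicator)
    finally show ?thesis .
  qed
  have iY: "integrable M (\<lambda>\<omega>. indicator {j} (A \<omega>) * Y \<omega>)"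
    by (rule Bochner_Integration.integrable_bound[OF Y_int]) (auto intro!: AE_I2 simp: indicator_def)
  have EQ1: "integrable M (\<lambda>\<omega>. usj \<omega> * Y \<omega>) \<and> (\<integral>\<omega>. usj \<omega> * Y \<omega> \<partial>M) = (\<integral>\<omega>. indicator {j} (A \<omega>) * Y \<omega> \<partial>M)"
    by (rule EQ[OF usjm _ Y_meas _ R1 iY]) (auto simp: usj_def pipos less_imp_le)

  have intpi: "integrable M (\<lambda>\<omega>. piS (XP \<omega>, A \<omega>))"
    by (rule Bochner_Integration.integrable_bound[where f="\<lambda>_. 1::real", rotated]) (auto intro!: AE_I2 simp: s1b)
  have "measure M ?E1 = (\<integral>\<omega>. piS (XP \<omega>, A \<omega>) * indicator (space (MP \<Otimes>\<^sub>M count_space (UNIV::nat set))) (XP \<omega>, A \<omega>) \<partial>M)"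
  proof -
    have "{\<omega>\<in>space M. S \<omega> \<and> (XP \<omega>, A \<omega>) \<in> space (MP \<Otimes>\<^sub>M count_space (UNIV::nat set))} = ?E1"
      using Z1S by auto
    then show ?thesis using piS_cond[rule_format, OF sets.top] by simp
  qed
  also have "\<dots> = (\<integral>\<omega>. piS (XP \<omega>, A \<omega>) \<partial>M)"
    by (rule Bochner_Integration.integral_cong) (use Z1S in \<open>auto simp: Pi_iff\<close>)
  finally have PE1: "measure M ?E1 = (\<integral>\<omega>. piS (XP \<omega>, A \<omega>) \<partial>M)" .
  have PE1pos: "measure M ?E1 > 0"
  proof (rule ccontr)
    assume "\<not> measure M ?E1 > 0"
    then have "(\<integral>\<omega>. piS (XP \<omega>, A \<omega>) \<partial>M) = 0" using PE1 measure_nonneg[of M ?E1] by linarith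
    then have "AE \<omega> in M. piS (XP \<omega>, A \<omega>) = 0"
      using integral_nonneg_eq_0_iff_AE[OF intpi] s1b by (auto intro!: AE_I2)
    moreover have "AE \<omega> in M. piS (XP \<omega>, A \<omega>) \<noteq> 0"
      using piS_pos A_range XPsp by (auto intro!: AE_I2 simp: less_imp_neq[symmetric] dest!: bspec)
    ultimately have "AE \<omega> in M. False" by eventually_elim auto
    then show False by (simp add: AE_False)
  qed
  have emE1: "emeasure M ?E1 = ennreal (measure M ?E1)" by (simp add: emeasure_eq_ennreal_measure)
  have emE1_0: "emeasure M ?E1 \<noteq> 0" "emeasure M ?E1 \<noteq> \<infinity>" using emE1 PE1pos by auto
  have N: "prob_space (uniform_measure M ?E1)" by (rule prob_space_uniform_measure[OF emE1_0])
  let ?N = "uniform_measure M ?E1"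
  have Z2m: "(\<lambda>\<omega>. (XP \<omega>, XS \<omega>)) \<in> measurable ?N (MP \<Otimes>\<^sub>M MS)" by measurable
  have Z2S: "(\<lambda>\<omega>. (XP \<omega>, XS \<omega>)) \<in> space ?N \<rightarrow> space (MP \<Otimes>\<^sub>M MS)"
    using Z2m by (auto simp: measurable_def)
  have E2m: "A -` {j} \<inter> space ?N \<in> sets ?N" by simp
  have YN: "Y \<in> borel_measurable ?N" by measurable
  have ci2: "\<forall>B\<in>sets borel. AE \<omega> in ?N.
       real_cond_exp ?N (vimage_algebra (space ?N) (\<lambda>\<omega>. (XP \<omega>, XS \<omega>)) (MP \<Otimes>\<^sub>M MS))
         (\<lambda>w. indicator (Y -` B \<inter> space ?N) w * indicator (A -` {j} \<inter> space ?N) w) \<omega>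
       = real_cond_exp ?N (vimage_algebra (space ?N) (\<lambda>\<omega>. (XP \<omega>, XS \<omega>)) (MP \<Otimes>\<^sub>M MS))
           (indicator (Y -` B \<inter> space ?N)) \<omega>
         * real_cond_exp ?N (vimage_algebra (space ?N) (\<lambda>\<omega>. (XP \<omega>, XS \<omega>)) (MP \<Otimes>\<^sub>M MS))
           (indicator (A -` {j} \<inter> space ?N)) \<omega>"
  proof -
    have T: "{j} \<in> sets (count_space (UNIV::nat set))" by simp
    show ?thesis using area_ci T unfolding cond_indep_def by blast
  qed
  have s2m: "(\<lambda>\<omega>. p (XP \<omega>, XS \<omega>)) \<in> borel_measurable
      (vimage_algebra (space ?N) (\<lambda>\<omega>. (XP \<omega>, XS \<omega>)) (MP \<Otimes>\<^sub>M MS))"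
    using measurable_compose[OF measurable_vimage_algebra1[OF Z2S] p_meas] by simp
  have s2b: "\<forall>\<omega>\<in>space ?N. 0 \<le> p (XP \<omega>, XS \<omega>) \<and> p (XP \<omega>, XS \<omega>) \<le> 1"
    using pprange by (auto simp: pp_def less_imp_le)
  have sc2: "\<forall>D\<in>sets (MP \<Otimes>\<^sub>M MS).
      (\<integral>\<omega>. (indicator (A -` {j} \<inter> space ?N) \<omega> :: real) * indicator D (XP \<omega>, XS \<omega>) \<partial>?N)
      = (\<integral>\<omega>. p (XP \<omega>, XS \<omega>) * indicator D (XP \<omega>, XS \<omega>) \<partial>?N)"
  proof
    fix D assume D[measurable]: "D \<in> sets (MP \<Otimes>\<^sub>M MS)"
    have Aj: "A -` {j} \<inter> space M \<in> sets M" by (rule measurable_sets[OF A_meas]) simp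
    have mD: "(\<lambda>\<omega>. indicator (A -` {j} \<inter> space M) \<omega> * indicator D (XP \<omega>, XS \<omega>) :: real) \<in> borel_measurable M"
      using Aj by measurable
    have "(\<integral>\<omega>. (indicator (A -` {j} \<inter> space ?N) \<omega> :: real) * indicator D (XP \<omega>, XS \<omega>) \<partial>?N)
        = (\<integral>\<omega>. (indicator ?E1 \<omega> :: real) * (indicator (A -` {j} \<inter> space M) \<omega> * indicator D (XP \<omega>, XS \<omega>)) \<partial>M) / measure M ?E1"
      by (subst int_unif) (use PE1pos mD in \<open>auto simp: finite_measure_axioms\<close>)
    also have "(\<integral>\<omega>. (indicator ?E1 \<omega> :: real) * (indicator (A -` {j} \<inter> space M) \<omega> * indicator D (XP \<omega>, XS \<omega>)) \<partial>M)
        = (\<integral>\<omega>. (indicator {\<omega>\<in>space M. S \<omega> \<and> A \<omega> = j \<and> (XP \<omega>, XS \<omega>) \<in> D} \<omega> :: real) \<partial>M)"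
      by (rule Bochner_Integration.integral_cong) (auto split: split_indicator)
    also have "\<dots> = measure M {\<omega>\<in>space M. S \<omega> \<and> A \<omega> = j \<and> (XP \<omega>, XS \<omega>) \<in> D}"
      by (simp add: Int_absorb2 subset_iff)
    also have "\<dots> = (\<integral>\<omega>. indicator ?E1 \<omega> * p (XP \<omega>, XS \<omega>) * indicator D (XP \<omega>, XS \<omega>) \<partial>M)"
      using p_cond D by blast
    also have "\<dots> = (\<integral>\<omega>. indicator ?E1 \<omega> * (p (XP \<omega>, XS \<omega>) * indicator D (XP \<omega>, XS \<omega>)) \<partial>M)"
      by (simp add: mult.assoc)
    also have "\<dots> / measure M ?E1 = (\<integral>\<omega>. p (XP \<omega>, XS \<omega>) * indicator D (XP \<omega>, XS \<omega>) \<partial>?N)"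
      by (subst int_unif) (use PE1pos in \<open>auto simp: finite_measure_axioms\<close>)
    finally show "(\<integral>\<omega>. (indicator (A -` {j} \<inter> space ?N) \<omega> :: real) * indicator D (XP \<omega>, XS \<omega>) \<partial>?N)
      = (\<integral>\<omega>. p (XP \<omega>, XS \<omega>) * indicator D (XP \<omega>, XS \<omega>) \<partial>?N)" .
  qed
  have R2: "(\<integral>\<^sup>+\<omega>. ennreal (usp \<omega>) * g (Y \<omega>) \<partial>M) = (\<integral>\<^sup>+\<omega>. ennreal (usj \<omega>) * g (Y \<omega>) \<partial>M)"
    if gm[measurable]: "g \<in> borel_measurable borel" for g :: "real \<Rightarrow> ennreal"
  proof -
    define G where "G = (\<lambda>x::('p \<times> 's) \<times> real. ennreal (1 / piS (fst (fst x), j)) * g (snd x))"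
    let ?X = "(MP \<Otimes>\<^sub>M MS) \<Otimes>\<^sub>M borel"
    have jc: "(\<lambda>x. j) \<in> measurable ?X (count_space (UNIV::nat set))" by (rule measurable_const) simp
    have a: "(\<lambda>x. piS (fst (fst x), j)) \<in> borel_measurable ?X"
      using measurable_compose[OF measurable_Pair[OF measurable_compose[OF measurable_fst measurable_fst] jc] piS_meas] .
    have cc: "(\<lambda>x. g (snd x)) \<in> borel_measurable ?X"
      using measurable_compose[OF measurable_snd gm] .
    have d: "(\<lambda>x. ennreal (1 / piS (fst (fst x), j))) \<in> borel_measurable ?X"
      using measurable_compose[OF borel_measurable_divide[OF borel_measurable_const a] measurable_ennreal] .
    have Gm: "G \<in> borel_measurable ?X"
      unfolding G_def by (rule borel_measurable_times_ennreal[OF d cc])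
    have X: "(\<integral>\<^sup>+\<omega>. indicator (A -` {j} \<inter> space ?N) \<omega> * G ((XP \<omega>, XS \<omega>), Y \<omega>) \<partial>?N)
       = (\<integral>\<^sup>+\<omega>. ennreal (p (XP \<omega>, XS \<omega>)) * G ((XP \<omega>, XS \<omega>), Y \<omega>) \<partial>?N)"
      by (rule GEN[OF N Z2m E2m YN refl ci2 s2m s2b sc2 Gm])
    have X2: "(\<integral>\<^sup>+\<omega>. indicator (A -` {j} \<inter> space M) \<omega> * G ((XP \<omega>, XS \<omega>), Y \<omega>) * indicator ?E1 \<omega> \<partial>M) / emeasure M ?E1
       = (\<integral>\<^sup>+\<omega>. ennreal (p (XP \<omega>, XS \<omega>)) * G ((XP \<omega>, XS \<omega>), Y \<omega>) * indicator ?E1 \<omega> \<partial>M) / emeasure M ?E1"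
    proof -
      have pm: "(\<lambda>\<omega>. ((XP \<omega>, XS \<omega>), Y \<omega>)) \<in> measurable M ((MP \<Otimes>\<^sub>M MS) \<Otimes>\<^sub>M borel)" by measurable
      have GZ: "(\<lambda>\<omega>. G ((XP \<omega>, XS \<omega>), Y \<omega>)) \<in> borel_measurable M"
        using measurable_compose[OF pm Gm] .
      have Aj: "A -` {j} \<inter> space M \<in> sets M" by (rule measurable_sets[OF A_meas]) simp
      have m1: "(\<lambda>\<omega>. indicator (A -` {j} \<inter> space M) \<omega> * G ((XP \<omega>, XS \<omega>), Y \<omega>)) \<in> borel_measurable M"
        by (rule borel_measurable_times_ennreal[OF borel_measurable_indicator[OF Aj] GZ])
      have m2: "(\<lambda>\<omega>. ennreal (p (XP \<omega>, XS \<omega>)) * G ((XP \<omega>, XS \<omega>), Y \<omega>)) \<in> borel_measurable M"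
        by (rule borel_measurable_times_ennreal[OF _ GZ]) measurable
      show ?thesis
        using X nn_integral_uniform_measure[OF m1 E1s] nn_integral_uniform_measure[OF m2 E1s] by simp
    qed
    have X3: "(\<integral>\<^sup>+\<omega>. indicator (A -` {j} \<inter> space M) \<omega> * G ((XP \<omega>, XS \<omega>), Y \<omega>) * indicator ?E1 \<omega> \<partial>M)
       = (\<integral>\<^sup>+\<omega>. ennreal (p (XP \<omega>, XS \<omega>)) * G ((XP \<omega>, XS \<omega>), Y \<omega>) * indicator ?E1 \<omega> \<partial>M)"
    proof -
      have one: "emeasure M ?E1 / emeasure M ?E1 = 1"
        by (rule ennreal_divide_self) (use emE1_0 in \<open>auto simp: less_top[symmetric]\<close>)
      show ?thesis using arg_cong[OF X2, of "\<lambda>x. x * emeasure M ?E1"]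
        by (simp add: ennreal_divide_times one)
    qed
    have "(\<integral>\<^sup>+\<omega>. ennreal (usp \<omega>) * g (Y \<omega>) \<partial>M)
        = (\<integral>\<^sup>+\<omega>. ennreal (p (XP \<omega>, XS \<omega>)) * G ((XP \<omega>, XS \<omega>), Y \<omega>) * indicator ?E1 \<omega> \<partial>M)"
      by (rule nn_integral_cong)
         (auto simp: usp_def G_def pi_def pp_def split: split_indicator
               intro!: ennr_div less_imp_le[OF conjunct1[OF pprange[unfolded pp_def]]])
    also note X3[symmetric]
    also have "(\<integral>\<^sup>+\<omega>. indicator (A -` {j} \<inter> space M) \<omega> * G ((XP \<omega>, XS \<omega>), Y \<omega>) * indicator ?E1 \<omega> \<partial>M)
        = (\<integral>\<^sup>+\<omega>. ennreal (usj \<omega>) * g (Y \<omega>) \<partial>M)"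
      by (rule nn_integral_cong)
         (auto simp: usj_def G_def pi_def split: split_indicator)
    finally show ?thesis .
  qed
  have EQ2: "integrable M (\<lambda>\<omega>. usp \<omega> * Y \<omega>) \<and> (\<integral>\<omega>. usp \<omega> * Y \<omega> \<partial>M) = (\<integral>\<omega>. usj \<omega> * Y \<omega> \<partial>M)"
    by (rule EQ[OF uspm usjm Y_meas _ R2]) (use EQ1 pipos pprange in \<open>auto simp: usj_def usp_def less_imp_le\<close>)

  let ?w = "\<lambda>\<omega>. usp \<omega> * Y \<omega>"
  have iw: "integrable M ?w" using EQ2 by simp
  have iwa: "integrable M (\<lambda>\<omega>. indicator ?E2 \<omega> * ?w \<omega>)"
    using integrable_mult_indicator[OF E2s iw] by simp
  have E2c: "{\<omega>\<in>space M. A \<omega> \<noteq> j} \<in> sets M" by measurable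
  have iwb: "integrable M (\<lambda>\<omega>. indicator {\<omega>\<in>space M. A \<omega> \<noteq> j} \<omega> * ?w \<omega>)"
    using integrable_mult_indicator[OF E2c iw] by simp
  have "(\<integral>\<omega>. indicator {\<omega>\<in>space M. S \<omega> \<and> A \<omega> = j} \<omega> / c * (Y \<omega> / piS (XP \<omega>, j)) * p (XP \<omega>, XS \<omega>) \<partial>M)
      = (\<integral>\<omega>. indicator ?E2 \<omega> * ?w \<omega> / c \<partial>M)"
    by (rule Bochner_Integration.integral_cong) (auto simp: usp_def pi_def pp_def mult_ac split: split_indicator)
  also have "\<dots> = (\<integral>\<omega>. indicator ?E2 \<omega> * ?w \<omega> \<partial>M) / c" by simp
  finally have T1: "(\<integral>\<omega>. indicator {\<omega>\<in>space M. S \<omega> \<and> A \<omega> = j} \<omega> / c * (Y \<omega> / piS (XP \<omega>, j)) * p (XP \<omega>, XS \<omega>) \<partial>M)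
      = (\<integral>\<omega>. indicator ?E2 \<omega> * ?w \<omega> \<partial>M) / c" .
  have "(\<integral>\<omega>. indicator {\<omega>\<in>space M. S \<omega> \<and> A \<omega> \<noteq> j} \<omega> / c
                 * (p (XP \<omega>, XS \<omega>) / (1 - p (XP \<omega>, XS \<omega>)))
                 * (Y \<omega> / piS (XP \<omega>, j)) * (1 - p (XP \<omega>, XS \<omega>)) \<partial>M)
      = (\<integral>\<omega>. indicator {\<omega>\<in>space M. A \<omega> \<noteq> j} \<omega> * ?w \<omega> / c \<partial>M)"
  proof (rule Bochner_Integration.integral_cong)
    fix \<omega> assume w: "\<omega> \<in> space M"
    have "1 - p (XP \<omega>, XS \<omega>) \<noteq> 0" using pprange[OF w] by (simp add: pp_def)
    then show "indicator {\<omega>\<in>space M. S \<omega> \<and> A \<omega> \<noteq> j} \<omega> / c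
                 * (p (XP \<omega>, XS \<omega>) / (1 - p (XP \<omega>, XS \<omega>)))
                 * (Y \<omega> / piS (XP \<omega>, j)) * (1 - p (XP \<omega>, XS \<omega>))
        = indicator {\<omega>\<in>space M. A \<omega> \<noteq> j} \<omega> * ?w \<omega> / c"
      using w by (auto simp: usp_def pi_def pp_def mult_ac split: split_indicator)
  qed simp
  also have "\<dots> = (\<integral>\<omega>. indicator {\<omega>\<in>space M. A \<omega> \<noteq> j} \<omega> * ?w \<omega> \<partial>M) / c" by simp
  finally have T2: "(\<integral>\<omega>. indicator {\<omega>\<in>space M. S \<omega> \<and> A \<omega> \<noteq> j} \<omega> / c
                 * (p (XP \<omega>, XS \<omega>) / (1 - p (XP \<omega>, XS \<omega>)))
                 * (Y \<omega> / piS (XP \<omega>, j)) * (1 - p (XP \<omega>, XS \<omega>)) \<partial>M)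
      = (\<integral>\<omega>. indicator {\<omega>\<in>space M. A \<omega> \<noteq> j} \<omega> * ?w \<omega> \<partial>M) / c" .
  have "(\<integral>\<omega>. indicator ?E2 \<omega> * ?w \<omega> \<partial>M) + (\<integral>\<omega>. indicator {\<omega>\<in>space M. A \<omega> \<noteq> j} \<omega> * ?w \<omega> \<partial>M)
      = (\<integral>\<omega>. indicator ?E2 \<omega> * ?w \<omega> + indicator {\<omega>\<in>space M. A \<omega> \<noteq> j} \<omega> * ?w \<omega> \<partial>M)"
    using iwa iwb by simp
  also have "\<dots> = (\<integral>\<omega>. ?w \<omega> \<partial>M)"
    by (rule Bochner_Integration.integral_cong) (auto split: split_indicator)
  also have "\<dots> = (\<integral>\<omega>. indicator {j} (A \<omega>) * Y \<omega> \<partial>M)" using EQ1 EQ2 by simp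
  also have "\<dots> = (\<integral>\<omega>. Y \<omega> * indicator ?E2 \<omega> \<partial>M)"
    by (rule Bochner_Integration.integral_cong) (auto split: split_indicator)
  finally have T3: "(\<integral>\<omega>. indicator ?E2 \<omega> * ?w \<omega> \<partial>M) + (\<integral>\<omega>. indicator {\<omega>\<in>space M. A \<omega> \<noteq> j} \<omega> * ?w \<omega> \<partial>M)
      = (\<integral>\<omega>. Y \<omega> * indicator ?E2 \<omega> \<partial>M)" .
  show ?thesis
    unfolding T1[unfolded c_def] T2[unfolded c_def] T3[symmetric]
    by (simp add: add_divide_distrib)
qed


end
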